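(* There exists a simple bi-partite graph $K$ such that $\mathcal{D}(d_K^{1/2}(Q))\subsetneq\mathcal{D}(\Delta_K^{1/2})$. In particular, for this $K$ there are no $a\in(0,1)$ and $C\ge0$ such that $(1-a)\langle f,d_K(Q)f\rangle-C\|f\|^2\le\langle f,\Delta_Kf\rangle\le(1+a)\langle f,d_K(Q)f\rangle+C\|f\|^2$ for all finitely supported $f$.
   Context: A simple graph $K=(\mathscr{V},\mathscr{E})$ has a countable vertex set $\mathscr{V}$, symmetric edge weights $\mathscr{E}:\mathscr{V}\times\mathscr{V}\to\{0,1\}$, zero magnetic phase and vertex weight $m\equiv1$; it is assumed locally finite, connected and without loops. Bi-partite: $\mathscr{V}$ splits into two subsets with no neighbors inside either subset. $\Delta_K$ is the Friedrichs extension in $\ell^2(\mathscr{V})$ of the form $\frac12\sum_{x,y}\mathscr{E}(x,y)|f(x)-f(y)|^2$ on finitely supported functions; $d_K(x)=\sum_y\mathscr{E}(x,y)$ and $d_K(Q)$ is multiplication by it. *)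

theory Defs
  imports "HOL-Analysis.Analysis"
begin

text \<open>Simple graphs on a vertex set V of natural numbers (every countable graph is
isomorphic to one of these). Edge weight E x y = True means edge weight 1.\<close>

definition simple_graph :: "nat set \<Rightarrow> (nat \<Rightarrow> nat \<Rightarrow> bool) \<Rightarrow> bool" where
  "simple_graph V E \<longleftrightarrow>
     V \<noteq> {} \<and>
     (\<forall>x y. E x y \<longrightarrow> x \<in> V \<and> y \<in> V) \<and>
     (\<forall>x y. E x y \<longleftrightarrow> E y x) \<and>
     (\<forall>x. \<not> E x x) \<and>
     (\<forall>x\<in>V. finite {y. E x y}) \<and>
     (\<forall>x\<in>V. \<forall>y\<in>V. (x, y) \<in> {(u, v). E u v}\<^sup>*)"

definition bipartite :: "nat set \<Rightarrow> (nat \<Rightarrow> nat \<Rightarrow> bool) \<Rightarrow> bool" where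
  "bipartite V E \<longleftrightarrow>
     (\<exists>A B. A \<union> B = V \<and> A \<inter> B = {} \<and>
        (\<forall>x y. E x y \<longrightarrow> \<not> (x \<in> A \<and> y \<in> A) \<and> \<not> (x \<in> B \<and> y \<in> B)))"

definition deg :: "(nat \<Rightarrow> nat \<Rightarrow> bool) \<Rightarrow> nat \<Rightarrow> nat" where
  "deg E x = card {y. E x y}"

definition l2 :: "nat set \<Rightarrow> (nat \<Rightarrow> complex) \<Rightarrow> bool" where
  "l2 V f \<longleftrightarrow> (\<forall>x. x \<notin> V \<longrightarrow> f x = 0) \<and> (\<lambda>x. (cmod (f x))\<^sup>2) summable_on V"

definition fin_supp :: "nat set \<Rightarrow> (nat \<Rightarrow> complex) \<Rightarrow> bool" where
  "fin_supp V f \<longleftrightarrow> finite {x. f x \<noteq> 0} \<and> (\<forall>x. x \<notin> V \<longrightarrow> f x = 0)"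

definition l2norm_sq :: "nat set \<Rightarrow> (nat \<Rightarrow> complex) \<Rightarrow> ennreal" where
  "l2norm_sq V f = (\<Sum>\<^sub>\<infinity>x\<in>V. ennreal ((cmod (f x))\<^sup>2))"

definition qform :: "(nat \<Rightarrow> nat \<Rightarrow> bool) \<Rightarrow> (nat \<Rightarrow> complex) \<Rightarrow> ennreal" where
  "qform E f = (\<Sum>\<^sub>\<infinity>p\<in>{(x, y). E x y}. ennreal ((cmod (f (fst p) - f (snd p)))\<^sup>2)) / 2"

text \<open>Domain of \<open>\<Delta>\<^sub>K\<^sup>1\<^sup>/\<^sup>2\<close> for the Friedrichs extension: the form domain of the closure
of Q restricted to finitely supported functions, i.e. the completion of the finitely
supported functions in the norm \<open>(\<parallel>f\<parallel>\<^sup>2 + Q(f))\<^sup>1\<^sup>/\<^sup>2\<close>, realised inside \<open>\<ell>\<^sup>2(V)\<close>.\<close>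
definition lap_sqrt_dom :: "nat set \<Rightarrow> (nat \<Rightarrow> nat \<Rightarrow> bool) \<Rightarrow> (nat \<Rightarrow> complex) set" where
  "lap_sqrt_dom V E = {f. l2 V f \<and> qform E f < \<infinity> \<and>
      (\<exists>g. (\<forall>n. fin_supp V (g n)) \<and>
           ((\<lambda>n. l2norm_sq V (g n - f)) \<longlongrightarrow> 0) sequentially \<and>
           ((\<lambda>n. qform E (g n - f)) \<longlongrightarrow> 0) sequentially)}"

text \<open>Domain of \<open>d\<^sub>K\<^sup>1\<^sup>/\<^sup>2(Q)\<close> (maximal multiplication operator).\<close>
definition deg_sqrt_dom :: "nat set \<Rightarrow> (nat \<Rightarrow> nat \<Rightarrow> bool) \<Rightarrow> (nat \<Rightarrow> complex) set" where
  "deg_sqrt_dom V E = {f. l2 V f \<and>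
      (\<Sum>\<^sub>\<infinity>x\<in>V. ennreal (real (deg E x) * (cmod (f x))\<^sup>2)) < \<infinity>}"

definition lap :: "(nat \<Rightarrow> nat \<Rightarrow> bool) \<Rightarrow> (nat \<Rightarrow> complex) \<Rightarrow> nat \<Rightarrow> complex" where
  "lap E f x = (\<Sum>y\<in>{y. E x y}. f x - f y)"

text \<open>\<open>\<ell>\<^sup>2\<close> inner product \<open>\<langle>f, g\<rangle>\<close> (antilinear in the first slot), for finitely supported f.\<close>
definition inner_fs :: "nat set \<Rightarrow> (nat \<Rightarrow> complex) \<Rightarrow> (nat \<Rightarrow> complex) \<Rightarrow> complex" where
  "inner_fs V f g = (\<Sum>x\<in>{x\<in>V. f x \<noteq> 0}. cnj (f x) * g x)"

end

theory Submission
  imports Defs "HOL-Library.Discrete_Functions"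
begin


definition blk :: "nat \<Rightarrow> nat" where "blk x = floor_log (x div 2 + 1)"

definition EE :: "nat \<Rightarrow> nat \<Rightarrow> bool" where
  "EE x y \<longleftrightarrow> odd (x + y) \<and> (blk x = blk y \<or> y = Suc x \<or> x = Suc y)"

lemma blk_le: "2 ^ blk x \<le> x div 2 + 1"
  unfolding blk_def by (rule floor_log_exp2_le) simp

lemma blk_gt: "x div 2 + 1 < 2 * 2 ^ blk x"
  unfolding blk_def by (rule floor_log_exp2_gt)

lemma blk_eqI: "2 ^ n \<le> x div 2 + 1 \<Longrightarrow> x div 2 + 1 < 2 * 2 ^ n \<Longrightarrow> blk x = n"
  unfolding blk_def by (rule floor_log_eqI) auto

lemma blk_lt_imp: "blk y = n \<Longrightarrow> y < 4 * 2 ^ n"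
  using blk_gt[of y] by auto

lemma blk_small: "x < n \<Longrightarrow> blk x < n"
proof -
  assume "x < n"
  have "2 ^ blk x \<le> x div 2 + 1" by (rule blk_le)
  also have "\<dots> \<le> n" using \<open>x < n\<close> by linarith
  also have "n < 2 ^ n" by (rule less_exp)
  finally show ?thesis by (simp add: power_strict_increasing_iff)
qed

lemma EE_sym: "EE x y \<longleftrightarrow> EE y x"
  unfolding EE_def by (auto simp: add.commute)

lemma EE_irrefl: "\<not> EE x x"
  unfolding EE_def by auto

lemma EE_Suc: "EE x (Suc x)"
  unfolding EE_def by auto

lemma nbr_sub: "{y. EE x y} \<subseteq> {..< 4 * 2 ^ blk x + x + 2}"
proof
  fix y assume "y \<in> {y. EE x y}"
  then have "blk x = blk y \<or> y = Suc x \<or> x = Suc y" by (simp add: EE_def)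
  then show "y \<in> {..< 4 * 2 ^ blk x + x + 2}"
  proof (elim disjE)
    assume "blk x = blk y" then show ?thesis using blk_lt_imp[of y "blk x"] by simp
  qed auto
qed

lemma nbr_fin: "finite {y. EE x y}"
  using nbr_sub finite_subset by blast

lemma conn_aux: "(m, m + k) \<in> {(u, v). EE u v}\<^sup>* \<and> (m + k, m) \<in> {(u, v). EE u v}\<^sup>*"
proof (induction k)
  case 0 then show ?case by simp
next
  case (Suc k)
  have "(m + k, m + Suc k) \<in> {(u, v). EE u v}" using EE_Suc by simp
  moreover have "(m + Suc k, m + k) \<in> {(u, v). EE u v}" using EE_Suc EE_sym by simp
  ultimately show ?case using Suc
    by (meson converse_rtrancl_into_rtrancl rtrancl.rtrancl_into_rtrancl)
qed

lemma conn: "(x, y) \<in> {(u, v). EE u v}\<^sup>*"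
proof (cases "x \<le> y")
  case True
  then show ?thesis using conn_aux[of x "y - x"] by simp
next
  case False
  then show ?thesis using conn_aux[of y "x - y"] by simp
qed

lemma simple: "simple_graph UNIV EE"
  unfolding simple_graph_def using EE_sym EE_irrefl nbr_fin conn by blast

lemma bip: "bipartite UNIV EE"
  unfolding bipartite_def
  by (rule exI[of _ "{x. even x}"], rule exI[of _ "{x. odd x}"]) (auto simp: EE_def)



lemma ens[simp]: "(f::'a \<Rightarrow> ennreal) summable_on A"
  by (rule nonneg_summable_on_complete) simp

lemma infsum_nat_ennreal: "infsum (a::nat \<Rightarrow> ennreal) UNIV = suminf a"
proof -
  have "(a has_sum infsum a UNIV) UNIV" by (rule has_sum_infsum) simp
  then have "a sums infsum a UNIV" by (rule has_sum_imp_sums)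
  then show ?thesis by (simp add: sums_iff)
qed

lemma tail_real:
  fixes r :: "nat \<Rightarrow> real"
  assumes "summable r"
  shows "(\<lambda>n. \<Sum>i. (if i < n then 0 else r i)) \<longlonglongrightarrow> 0"
proof -
  have eq: "(\<Sum>i. (if i < n then 0 else r i)) = suminf r - (\<Sum>i<n. r i)" for n
  proof -
    have s1: "summable (\<lambda>i. if i < n then r i else 0)"
      by (rule summable_finite[of "{..<n}"]) auto
    have "(\<Sum>i. (if i < n then 0 else r i)) = (\<Sum>i. r i - (if i < n then r i else 0))"
      by (rule suminf_cong) auto
    also have "\<dots> = suminf r - (\<Sum>i. (if i < n then r i else 0))"
      using suminf_diff[OF assms s1] by simp
    also have "(\<Sum>i. (if i < n then r i else 0)) = (\<Sum>i<n. r i)"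
      by (subst suminf_finite[of "{..<n}"]) auto
    finally show ?thesis .
  qed
  have "(\<lambda>n. suminf r - (\<Sum>i<n. r i)) \<longlonglongrightarrow> suminf r - suminf r"
    by (intro tendsto_intros summable_LIMSEQ assms)
  then show ?thesis unfolding eq by simp
qed

lemma tail_ennreal:
  fixes r :: "nat \<Rightarrow> real"
  assumes nn: "\<And>x. 0 \<le> r x" and fin: "(\<Sum>\<^sub>\<infinity>x\<in>UNIV. ennreal (r x)) < \<infinity>"
  shows "(\<lambda>n. \<Sum>\<^sub>\<infinity>x\<in>UNIV. (if x < n then 0 else ennreal (r x))) \<longlonglongrightarrow> 0"
proof -
  have "(\<Sum>i. ennreal (r i)) \<noteq> top" using fin by (simp add: infsum_nat_ennreal)
  then have sr: "summable r" using summable_suminf_not_top nn by blast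
  have eq: "(\<Sum>\<^sub>\<infinity>x\<in>UNIV. (if x < n then 0 else ennreal (r x)))
      = ennreal (\<Sum>i. (if i < n then 0 else r i))" for n
  proof -
    have s: "summable (\<lambda>i. if i < n then 0 else r i)"
      by (rule summable_comparison_test'[OF sr]) (use nn in auto)
    have "(\<Sum>\<^sub>\<infinity>x\<in>UNIV. (if x < n then 0 else ennreal (r x)))
        = (\<Sum>i. ennreal (if i < n then 0 else r i))"
      by (simp add: infsum_nat_ennreal if_distrib cong: if_cong)
    also have "\<dots> = ennreal (\<Sum>i. (if i < n then 0 else r i))"
      by (rule suminf_ennreal_eq) (use nn s in \<open>auto simp: summable_sums\<close>)
    finally show ?thesis .
  qed
  show ?thesis unfolding eq
    using tendsto_ennrealI[OF tail_real[OF sr]] by simp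
qed



lemma sq_diff_le: "(cmod (a - b))\<^sup>2 \<le> 2 * (cmod a)\<^sup>2 + 2 * (cmod b)\<^sup>2"
proof -
  have "cmod (a - b) \<le> cmod a + cmod b" by (rule norm_triangle_ineq4)
  then have "(cmod (a - b))\<^sup>2 \<le> (cmod a + cmod b)\<^sup>2"
    by (rule power_mono) simp
  also have "\<dots> \<le> 2 * (cmod a)\<^sup>2 + 2 * (cmod b)\<^sup>2"
  proof -
    have "0 \<le> (cmod a - cmod b)\<^sup>2" by simp
    then show ?thesis unfolding power2_sum power2_diff by linarith
  qed
  finally show ?thesis .
qed

lemma ennreal_two_sq: "ennreal (2 * (a::real)\<^sup>2 + 2 * (b::real)\<^sup>2) = (ennreal (a\<^sup>2) + ennreal (b\<^sup>2)) + (ennreal (a\<^sup>2) + ennreal (b\<^sup>2))"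
proof -
  have "2 * a\<^sup>2 + 2 * b\<^sup>2 = (a\<^sup>2 + b\<^sup>2) + (a\<^sup>2 + b\<^sup>2)" by simp
  then show ?thesis by (simp only: ennreal_plus zero_le_power2 add_nonneg_nonneg)
qed

lemma S1_le:
  assumes fin: "\<And>x. finite {y. E x y}"
  shows "(\<Sum>\<^sub>\<infinity>p\<in>{(x, y). E x y}. ennreal ((cmod (h (fst p)))\<^sup>2))
      \<le> (\<Sum>\<^sub>\<infinity>x\<in>UNIV. ennreal (real (deg E x) * (cmod (h x))\<^sup>2))"
proof -
  let ?P = "{(x, y). E x y}"
  let ?g = "\<lambda>x. ennreal ((cmod (h x))\<^sup>2)"
  let ?D = "(\<Sum>\<^sub>\<infinity>x\<in>UNIV. ennreal (real (deg E x) * (cmod (h x))\<^sup>2))"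
  have D: "?D = (SUP F\<in>{F. finite F \<and> F \<subseteq> UNIV}. sum (\<lambda>x. ennreal (real (deg E x) * (cmod (h x))\<^sup>2)) F)"
    by (rule nonneg_infsum_complete) simp
  have "(\<Sum>\<^sub>\<infinity>p\<in>?P. ?g (fst p)) = (SUP F\<in>{F. finite F \<and> F \<subseteq> ?P}. sum (\<lambda>p. ?g (fst p)) F)"
    by (rule nonneg_infsum_complete) simp
  also have "\<dots> \<le> ?D"
  proof (rule SUP_least)
    fix F assume F: "F \<in> {F. finite F \<and> F \<subseteq> ?P}"
    let ?S = "Sigma (fst ` F) (\<lambda>x. {y. E x y})"
    have finS: "finite ?S" using F fin by (intro finite_SigmaI) auto
    have "F \<subseteq> ?S" using F by force
    then have "sum (\<lambda>p. ?g (fst p)) F \<le> sum (\<lambda>p. ?g (fst p)) ?S"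
      by (intro sum_mono2 finS) auto
    also have "\<dots> = (\<Sum>x\<in>fst ` F. \<Sum>y\<in>{y. E x y}. ?g x)"
    proof -
      have "(\<Sum>x\<in>fst ` F. \<Sum>y\<in>{y. E x y}. ?g x) = (\<Sum>(x,y)\<in>?S. ?g x)"
        by (rule sum.Sigma) (use F fin in auto)
      then show ?thesis unfolding case_prod_unfold by simp
    qed
    also have "\<dots> = (\<Sum>x\<in>fst ` F. ennreal (real (deg E x) * (cmod (h x))\<^sup>2))"
      by (intro sum.cong refl) (simp add: deg_def ennreal_mult ennreal_of_nat_eq_real_of_nat)
    also have "\<dots> \<le> ?D" unfolding D
      by (rule SUP_upper) (use F in auto)
    finally show "sum (\<lambda>p. ?g (fst p)) F \<le> ?D" .
  qed
  finally show ?thesis .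
qed

lemma qform_le:
  assumes sym: "\<And>x y. E x y \<Longrightarrow> E y x" and fin: "\<And>x. finite {y. E x y}"
  shows "qform E h \<le> 2 * (\<Sum>\<^sub>\<infinity>x\<in>UNIV. ennreal (real (deg E x) * (cmod (h x))\<^sup>2))"
proof -
  let ?P = "{(x, y). E x y}"
  let ?g = "\<lambda>x. ennreal ((cmod (h x))\<^sup>2)"
  let ?D = "(\<Sum>\<^sub>\<infinity>x\<in>UNIV. ennreal (real (deg E x) * (cmod (h x))\<^sup>2))"
  define S1 where "S1 = (\<Sum>\<^sub>\<infinity>p\<in>?P. ?g (fst p))"
  have S2: "(\<Sum>\<^sub>\<infinity>p\<in>?P. ?g (snd p)) = S1"
  proof -
    have b: "bij_betw prod.swap ?P ?P"
      by (rule bij_betwI[of _ _ _ prod.swap]) (auto intro: sym)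
    show ?thesis
      unfolding S1_def using infsum_reindex_bij_betw[OF b, of "\<lambda>p. ?g (fst p)"] by simp
  qed
  have "(\<Sum>\<^sub>\<infinity>p\<in>?P. ennreal ((cmod (h (fst p) - h (snd p)))\<^sup>2))
     \<le> (\<Sum>\<^sub>\<infinity>p\<in>?P. (?g (fst p) + ?g (snd p)) + (?g (fst p) + ?g (snd p)))"
  proof (rule infsum_mono)
    fix p
    have "ennreal ((cmod (h (fst p) - h (snd p)))\<^sup>2)
       \<le> ennreal (2 * (cmod (h (fst p)))\<^sup>2 + 2 * (cmod (h (snd p)))\<^sup>2)"
      by (rule ennreal_leI) (rule sq_diff_le)
    also have "\<dots> = (?g (fst p) + ?g (snd p)) + (?g (fst p) + ?g (snd p))"
      by (rule ennreal_two_sq)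
    finally show "ennreal ((cmod (h (fst p) - h (snd p)))\<^sup>2) \<le> (?g (fst p) + ?g (snd p)) + (?g (fst p) + ?g (snd p))" .
  qed simp_all
  also have "\<dots> = (S1 + S1) + (S1 + S1)"
  proof -
    have a: "(\<Sum>\<^sub>\<infinity>p\<in>?P. (?g (fst p) + ?g (snd p)) + (?g (fst p) + ?g (snd p)))
        = (\<Sum>\<^sub>\<infinity>p\<in>?P. ?g (fst p) + ?g (snd p)) + (\<Sum>\<^sub>\<infinity>p\<in>?P. ?g (fst p) + ?g (snd p))"
      by (rule infsum_add) simp_all
    have b0: "(\<Sum>\<^sub>\<infinity>p\<in>?P. ?g (fst p) + ?g (snd p)) = (\<Sum>\<^sub>\<infinity>p\<in>?P. ?g (fst p)) + (\<Sum>\<^sub>\<infinity>p\<in>?P. ?g (snd p))"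
      by (rule infsum_add) simp_all
    have b: "(\<Sum>\<^sub>\<infinity>p\<in>?P. ?g (fst p) + ?g (snd p)) = S1 + S1"
      using b0 S2 unfolding S1_def by simp
    show ?thesis using a b by simp
  qed
  finally have le: "(\<Sum>\<^sub>\<infinity>p\<in>?P. ennreal ((cmod (h (fst p) - h (snd p)))\<^sup>2)) \<le> 2 * (2 * S1)"
    by (metis mult_2)
  have "qform E h \<le> (2 * (2 * S1)) / 2"
    unfolding qform_def using le by (intro divide_right_mono_ennreal) auto
  also have "\<dots> = 2 * S1"
    using ennreal_mult_divide_eq[of "2::ennreal" "2 * S1"] by (simp add: mult.commute)
  also have "\<dots> \<le> 2 * ?D"
    unfolding S1_def by (intro mult_left_mono S1_le fin) simp
  finally show ?thesis .
qed



definition E2 :: "nat \<Rightarrow> nat \<Rightarrow> bool" where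
  "E2 x y \<longleftrightarrow> EE x y \<and> blk x \<noteq> blk y"

lemma E2_nbr: "{y. E2 x y} \<subseteq> {Suc x, x - 1}"
  unfolding E2_def EE_def by auto

lemma E2_fin: "finite {y. E2 x y}"
  using E2_nbr finite_subset by blast

lemma E2_deg: "deg E2 x \<le> 2"
proof -
  have "deg E2 x \<le> card {Suc x, x - 1}"
    unfolding deg_def by (rule card_mono) (use E2_nbr in auto)
  also have "\<dots> \<le> 2" by (simp add: card_insert_le_m1)
  finally show ?thesis .
qed

lemma qform_blockconst:
  assumes bc: "\<And>x y. blk x = blk y \<Longrightarrow> h x = h y"
  shows "qform EE h \<le> 2 * (l2norm_sq UNIV h + l2norm_sq UNIV h)"
proof -
  have 1: "qform EE h = qform E2 h"
    unfolding qform_def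
  proof (rule arg_cong[where f="\<lambda>t. t / 2"], rule infsum_cong_neutral)
    fix p assume "p \<in> {(x, y). EE x y} - {(x, y). E2 x y}"
    then have "blk (fst p) = blk (snd p)" by (auto simp: E2_def)
    then have "h (fst p) = h (snd p)" by (rule bc)
    then show "ennreal ((cmod (h (fst p) - h (snd p)))\<^sup>2) = 0" by simp
  next
    fix p assume "p \<in> {(x, y). E2 x y} - {(x, y). EE x y}"
    then show "ennreal ((cmod (h (fst p) - h (snd p)))\<^sup>2) = 0" by (auto simp: E2_def)
  qed (rule refl)
  have 2: "qform E2 h \<le> 2 * (\<Sum>\<^sub>\<infinity>x\<in>UNIV. ennreal (real (deg E2 x) * (cmod (h x))\<^sup>2))"
  proof (rule qform_le)
    fix x y assume "E2 x y" then show "E2 y x" by (auto simp: E2_def EE_sym)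
  next
    fix x show "finite {y. E2 x y}" by (rule E2_fin)
  qed
  have 3: "(\<Sum>\<^sub>\<infinity>x\<in>UNIV. ennreal (real (deg E2 x) * (cmod (h x))\<^sup>2))
      \<le> (\<Sum>\<^sub>\<infinity>x\<in>UNIV. ennreal ((cmod (h x))\<^sup>2) + ennreal ((cmod (h x))\<^sup>2))"
  proof (rule infsum_mono)
    fix x :: nat
    have "real (deg E2 x) * (cmod (h x))\<^sup>2 \<le> 2 * (cmod (h x))\<^sup>2"
      using E2_deg[of x] by (intro mult_right_mono) auto
    then have "ennreal (real (deg E2 x) * (cmod (h x))\<^sup>2) \<le> ennreal ((cmod (h x))\<^sup>2 + (cmod (h x))\<^sup>2)"
      by (intro ennreal_leI) linarith
    also have "\<dots> = ennreal ((cmod (h x))\<^sup>2) + ennreal ((cmod (h x))\<^sup>2)"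
      by (rule ennreal_plus) simp_all
    finally show "ennreal (real (deg E2 x) * (cmod (h x))\<^sup>2) \<le> ennreal ((cmod (h x))\<^sup>2) + ennreal ((cmod (h x))\<^sup>2)" .
  qed simp_all
  have 4: "(\<Sum>\<^sub>\<infinity>x\<in>UNIV. ennreal ((cmod (h x))\<^sup>2) + ennreal ((cmod (h x))\<^sup>2)) = l2norm_sq UNIV h + l2norm_sq UNIV h"
    unfolding l2norm_sq_def by (rule infsum_add) simp_all
  have 5: "2 * (\<Sum>\<^sub>\<infinity>x\<in>UNIV. ennreal (real (deg E2 x) * (cmod (h x))\<^sup>2)) \<le> 2 * (l2norm_sq UNIV h + l2norm_sq UNIV h)"
    using 3 4 by (intro mult_left_mono) simp_all
  show ?thesis unfolding 1 using 2 5 by (rule order_trans)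
qed

definition trunc :: "nat \<Rightarrow> (nat \<Rightarrow> complex) \<Rightarrow> nat \<Rightarrow> complex" where
  "trunc n f x = (if blk x < n then f x else 0)"

lemma trunc_fin: "fin_supp UNIV (trunc n f)"
proof -
  have "{x. trunc n f x \<noteq> 0} \<subseteq> {..< 4 * 2 ^ n}"
  proof
    fix x assume "x \<in> {x. trunc n f x \<noteq> 0}"
    then have "blk x < n" by (auto simp: trunc_def split: if_splits)
    then have "(2::nat) ^ blk x \<le> 2 ^ n" by (intro power_increasing) auto
    then have c: "4 * 2 ^ blk x \<le> (4::nat) * 2 ^ n" by (rule mult_le_mono2)
    have b: "x < 4 * 2 ^ blk x" by (rule blk_lt_imp) simp
    show "x \<in> {..< 4 * 2 ^ n}" unfolding lessThan_iff using b c by (rule order_less_le_trans)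
  qed
  then show ?thesis unfolding fin_supp_def using finite_subset by blast
qed

lemma trunc_diff: "(cmod ((trunc n f - f) x))\<^sup>2 = (if blk x < n then 0 else (cmod (f x))\<^sup>2)"
  by (simp add: trunc_def)

lemma tail_blk:
  fixes r :: "nat \<Rightarrow> real"
  assumes nn: "\<And>x. 0 \<le> r x" and fin: "(\<Sum>\<^sub>\<infinity>x\<in>UNIV. ennreal (r x)) < \<infinity>"
  shows "(\<lambda>n. \<Sum>\<^sub>\<infinity>x\<in>UNIV. ennreal (if blk x < n then 0 else r x)) \<longlonglongrightarrow> 0"
proof (rule tendsto_sandwich[OF _ _ tendsto_const tail_ennreal[OF nn fin]])
  show "\<forall>\<^sub>F n in sequentially. 0 \<le> (\<Sum>\<^sub>\<infinity>x\<in>UNIV. ennreal (if blk x < n then 0 else r x))"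
    by simp
  show "\<forall>\<^sub>F n in sequentially. (\<Sum>\<^sub>\<infinity>x\<in>UNIV. ennreal (if blk x < n then 0 else r x))
      \<le> (\<Sum>\<^sub>\<infinity>x\<in>UNIV. (if x < n then 0 else ennreal (r x)))"
  proof (rule always_eventually, rule allI, rule infsum_mono)
    fix n x
    show "ennreal (if blk x < n then 0 else r x) \<le> (if x < n then 0 else ennreal (r x))"
      using blk_small[of x n] by auto
  qed simp_all
qed

lemma l2_fin: "l2 UNIV f \<Longrightarrow> l2norm_sq UNIV f < \<infinity>"
proof -
  assume "l2 UNIV f"
  then have "(\<lambda>x. (cmod (f x))\<^sup>2) summable_on UNIV" by (simp add: l2_def)
  then have "summable (\<lambda>x. (cmod (f x))\<^sup>2)" by (rule summable_on_imp_summable)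
  then have "(\<Sum>x. ennreal ((cmod (f x))\<^sup>2)) \<noteq> top"
    by (rule ennreal_suminf_neq_top) simp
  then show ?thesis unfolding l2norm_sq_def infsum_nat_ennreal by (simp add: top.not_eq_extremum)
qed



lemma lim_tail:
  fixes r :: "nat \<Rightarrow> real" and q :: "nat \<Rightarrow> ennreal"
  assumes nn: "\<And>x. 0 \<le> r x" and fin: "(\<Sum>\<^sub>\<infinity>x\<in>UNIV. ennreal (r x)) < \<infinity>"
    and le: "\<And>n. q n \<le> 2 * (\<Sum>\<^sub>\<infinity>x\<in>UNIV. ennreal (if blk x < n then 0 else r x))"
  shows "q \<longlonglongrightarrow> 0"
proof (rule tendsto_sandwich[OF _ _ tendsto_const])
  show "\<forall>\<^sub>F n in sequentially. 0 \<le> q n" by simp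
  show "\<forall>\<^sub>F n in sequentially. q n \<le> 2 * (\<Sum>\<^sub>\<infinity>x\<in>UNIV. ennreal (if blk x < n then 0 else r x))"
    using le by simp
  have "(\<lambda>n. 2 * (\<Sum>\<^sub>\<infinity>x\<in>UNIV. ennreal (if blk x < n then 0 else r x))) \<longlonglongrightarrow> 2 * 0"
    by (rule ennreal_tendsto_cmult) (simp_all add: tail_blk[OF nn fin])
  then show "(\<lambda>n. 2 * (\<Sum>\<^sub>\<infinity>x\<in>UNIV. ennreal (if blk x < n then 0 else r x))) \<longlonglongrightarrow> 0"
    by simp
qed

lemma l2_trunc: "l2norm_sq UNIV (trunc n f - f) = (\<Sum>\<^sub>\<infinity>x\<in>UNIV. ennreal (if blk x < n then 0 else (cmod (f x))\<^sup>2))"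
  unfolding l2norm_sq_def trunc_diff by (rule infsum_cong) simp

lemma incl: "deg_sqrt_dom UNIV EE \<subseteq> lap_sqrt_dom UNIV EE"
proof
  fix f assume "f \<in> deg_sqrt_dom UNIV EE"
  then have l2f: "l2 UNIV f"
    and Df: "(\<Sum>\<^sub>\<infinity>x\<in>UNIV. ennreal (real (deg EE x) * (cmod (f x))\<^sup>2)) < \<infinity>"
    unfolding deg_sqrt_dom_def by simp_all
  have qle: "qform EE h \<le> 2 * (\<Sum>\<^sub>\<infinity>x\<in>UNIV. ennreal (real (deg EE x) * (cmod (h x))\<^sup>2))" for h
  proof (rule qform_le)
    fix x y assume "EE x y" then show "EE y x" using EE_sym by blast
  next
    fix x show "finite {y. EE x y}" by (rule nbr_fin)
  qed
  have q: "qform EE f < \<infinity>"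
    using qle[of f] Df by (simp add: ennreal_mult_less_top order.strict_trans1)
  have L: "(\<lambda>n. l2norm_sq UNIV (trunc n f - f)) \<longlonglongrightarrow> 0"
  proof (rule lim_tail[where r="\<lambda>x. (cmod (f x))\<^sup>2"])
    show "(\<Sum>\<^sub>\<infinity>x\<in>UNIV. ennreal ((cmod (f x))\<^sup>2)) < \<infinity>"
      using l2_fin[OF l2f] by (simp add: l2norm_sq_def)
    fix n
    have "l2norm_sq UNIV (trunc n f - f) \<le> 1 * l2norm_sq UNIV (trunc n f - f)" by simp
    also have "\<dots> \<le> 2 * l2norm_sq UNIV (trunc n f - f)" by (intro mult_right_mono) simp_all
    finally show "l2norm_sq UNIV (trunc n f - f) \<le> 2 * (\<Sum>\<^sub>\<infinity>x\<in>UNIV. ennreal (if blk x < n then 0 else (cmod (f x))\<^sup>2))"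
      by (simp add: l2_trunc)
  qed simp
  have Q: "(\<lambda>n. qform EE (trunc n f - f)) \<longlonglongrightarrow> 0"
  proof (rule lim_tail[where r="\<lambda>x. real (deg EE x) * (cmod (f x))\<^sup>2"])
    show "(\<Sum>\<^sub>\<infinity>x\<in>UNIV. ennreal (real (deg EE x) * (cmod (f x))\<^sup>2)) < \<infinity>" by (rule Df)
    fix n
    have "(\<Sum>\<^sub>\<infinity>x\<in>UNIV. ennreal (real (deg EE x) * (cmod ((trunc n f - f) x))\<^sup>2))
        = (\<Sum>\<^sub>\<infinity>x\<in>UNIV. ennreal (if blk x < n then 0 else real (deg EE x) * (cmod (f x))\<^sup>2))"
      unfolding trunc_diff by (rule infsum_cong) simp
    then show "qform EE (trunc n f - f) \<le> 2 * (\<Sum>\<^sub>\<infinity>x\<in>UNIV. ennreal (if blk x < n then 0 else real (deg EE x) * (cmod (f x))\<^sup>2))"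
      using qle[of "trunc n f - f"] by simp
  qed simp
  show "f \<in> lap_sqrt_dom UNIV EE"
    unfolding lap_sqrt_dom_def mem_Collect_eq
    by (intro conjI l2f q exI[of _ "\<lambda>n. trunc n f"] allI trunc_fin L Q)
qed



lemma deg_ge: "2 ^ blk x \<le> deg EE x"
proof -
  define n where "n = blk x"
  define p :: nat where "p = (if even x then 1 else 0)"
  define \<phi> where "\<phi> j = 2 * (2 ^ n - 1 + j) + p" for j
  have p1: "p \<le> 1" by (simp add: p_def)
  have inj: "inj_on \<phi> {..<2^n}"
    by (auto simp: inj_on_def \<phi>_def)
  have sub: "\<phi> ` {..<2^n} \<subseteq> {y. EE x y}"
  proof
    fix y assume "y \<in> \<phi> ` {..<2^n}"
    then obtain j where j: "j < 2^n" "y = \<phi> j" by auto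
    have pw: "(1::nat) \<le> 2 ^ n" by simp
    have "y div 2 = 2 ^ n - 1 + j" using p1 by (simp add: j \<phi>_def)
    then have d: "y div 2 + 1 = 2 ^ n + j" using pw by simp
    have "blk y = n" by (rule blk_eqI) (use d j in auto)
    moreover have "odd (x + y)" by (cases "even x") (auto simp: j \<phi>_def p_def)
    ultimately show "y \<in> {y. EE x y}" by (simp add: EE_def n_def)
  qed
  have "2 ^ n = card (\<phi> ` {..<2^n})" using inj by (simp add: card_image)
  also have "\<dots> \<le> card {y. EE x y}" by (rule card_mono[OF nbr_fin sub])
  finally show ?thesis by (simp add: deg_def n_def)
qed

definition w :: "nat \<Rightarrow> complex" where "w x = of_real (inverse (2 ^ blk x))"

lemma cmod_w: "cmod (w x) = inverse (2 ^ blk x)"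
  by (simp add: w_def norm_inverse norm_power)

lemma w_bound: "inverse ((2::real) ^ blk x) \<le> 4 * inverse (real (Suc x))"
proof -
  have "x div 2 + 1 < 2 * 2 ^ blk x" by (rule blk_gt)
  then have "Suc x \<le> 4 * 2 ^ blk x" by linarith
  then have a: "real (Suc x) \<le> 4 * 2 ^ blk x" by (metis of_nat_le_iff of_nat_mult of_nat_numeral of_nat_power)
  have "inverse ((2::real) ^ blk x) = 4 / (4 * 2 ^ blk x)" by (simp add: inverse_eq_divide)
  also have "\<dots> \<le> 4 / real (Suc x)"
    by (rule divide_left_mono[OF a]) simp_all
  finally show ?thesis by (simp add: divide_inverse)
qed

lemma w_l2: "l2 UNIV w"
proof -
  have s0: "summable (\<lambda>n. inverse (real n ^ 2))" by (rule inverse_power_summable) simp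
  have s1: "summable (\<lambda>n. inverse (real (Suc n) ^ 2))"
    using s0 by (subst summable_Suc_iff[where f="\<lambda>n. inverse (real n ^ 2)"])
  have s2: "summable (\<lambda>n. 16 * inverse (real (Suc n) ^ 2))" by (rule summable_mult[OF s1])
  have "summable (\<lambda>x. (cmod (w x))\<^sup>2)"
  proof (rule summable_comparison_test'[OF s2])
    fix x
    have "0 \<le> inverse ((2::real) ^ blk x)" by simp
    then have "(inverse ((2::real) ^ blk x))\<^sup>2 \<le> (4 * inverse (real (Suc x)))\<^sup>2"
      by (rule power_mono[OF w_bound])
    then show "norm ((cmod (w x))\<^sup>2) \<le> 16 * inverse (real (Suc x) ^ 2)"
      by (simp add: cmod_w power_mult_distrib power_inverse)
  qed
  then have "(\<lambda>x. (cmod (w x))\<^sup>2) summable_on UNIV"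
    by (subst summable_on_UNIV_nonneg_real_iff) simp_all
  then show ?thesis by (simp add: l2_def)
qed

lemma w_not_deg: "w \<notin> deg_sqrt_dom UNIV EE"
proof
  assume "w \<in> deg_sqrt_dom UNIV EE"
  then have fin: "(\<Sum>\<^sub>\<infinity>x\<in>UNIV. ennreal (real (deg EE x) * (cmod (w x))\<^sup>2)) < \<infinity>"
    unfolding deg_sqrt_dom_def by simp
  have "(\<Sum>\<^sub>\<infinity>x\<in>UNIV. ennreal (inverse (real (Suc x)))) \<le> (\<Sum>\<^sub>\<infinity>x\<in>UNIV. ennreal (real (deg EE x) * (cmod (w x))\<^sup>2))"
  proof (rule infsum_mono)
    fix x
    have b: "(2::real) ^ blk x \<le> real (deg EE x)"
      using deg_ge[of x] of_nat_le_iff[of "2 ^ blk x" "deg EE x", where 'a=real] by simp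
    have c: "(2::real) ^ blk x \<le> real (Suc x)"
    proof -
      have "2 ^ blk x \<le> x div 2 + 1" by (rule blk_le)
      then have "2 ^ blk x \<le> Suc x" by linarith
      then show ?thesis using of_nat_le_iff[of "2 ^ blk x" "Suc x", where 'a=real] by simp
    qed
    have "inverse (real (Suc x)) \<le> inverse ((2::real) ^ blk x)"
      using c by (intro le_imp_inverse_le) simp_all
    also have "\<dots> = 2 ^ blk x * (inverse ((2::real) ^ blk x))\<^sup>2"
      by (simp add: power2_eq_square)
    also have "\<dots> \<le> real (deg EE x) * (inverse ((2::real) ^ blk x))\<^sup>2"
      by (rule mult_right_mono[OF b]) simp
    finally show "ennreal (inverse (real (Suc x))) \<le> ennreal (real (deg EE x) * (cmod (w x))\<^sup>2)"
      by (intro ennreal_leI) (simp add: cmod_w)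
  qed simp_all
  then have "(\<Sum>\<^sub>\<infinity>x\<in>UNIV. ennreal (inverse (real (Suc x)))) < \<infinity>"
    using fin by (rule le_less_trans)
  then have "(\<Sum>x. ennreal (inverse (real (Suc x)))) \<noteq> top"
    unfolding infsum_nat_ennreal by simp
  then have "summable (\<lambda>x. inverse (real (Suc x)))"
    by (rule summable_suminf_not_top[rotated]) simp
  then have "summable (\<lambda>n. inverse (of_nat n) :: real)"
    by (subst summable_Suc_iff[symmetric]) simp
  then show False using not_summable_harmonic by blast
qed



lemma w_lap: "w \<in> lap_sqrt_dom UNIV EE"
proof -
  have l2w: "l2 UNIV w" by (rule w_l2)
  have Lfin: "l2norm_sq UNIV w < \<infinity>" by (rule l2_fin[OF l2w])
  have q0: "qform EE w \<le> 2 * (l2norm_sq UNIV w + l2norm_sq UNIV w)"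
    by (rule qform_blockconst) (simp add: w_def)
  have "2 * (l2norm_sq UNIV w + l2norm_sq UNIV w) < \<infinity>"
    using Lfin by (simp add: ennreal_mult_less_top)
  with q0 have q: "qform EE w < \<infinity>" by (rule le_less_trans)
  have L: "(\<lambda>n. l2norm_sq UNIV (trunc n w - w)) \<longlonglongrightarrow> 0"
  proof (rule lim_tail[where r="\<lambda>x. (cmod (w x))\<^sup>2"])
    show "(\<Sum>\<^sub>\<infinity>x\<in>UNIV. ennreal ((cmod (w x))\<^sup>2)) < \<infinity>"
      using Lfin by (simp add: l2norm_sq_def)
    fix n
    have "l2norm_sq UNIV (trunc n w - w) \<le> 1 * l2norm_sq UNIV (trunc n w - w)" by simp
    also have "\<dots> \<le> 2 * l2norm_sq UNIV (trunc n w - w)" by (intro mult_right_mono) simp_all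
    finally show "l2norm_sq UNIV (trunc n w - w) \<le> 2 * (\<Sum>\<^sub>\<infinity>x\<in>UNIV. ennreal (if blk x < n then 0 else (cmod (w x))\<^sup>2))"
      by (simp add: l2_trunc)
  qed simp
  have Qle: "qform EE (trunc n w - w) \<le> 2 * (l2norm_sq UNIV (trunc n w - w) + l2norm_sq UNIV (trunc n w - w))" for n
    by (rule qform_blockconst) (simp add: w_def trunc_def)
  have lim2: "(\<lambda>n. 2 * (l2norm_sq UNIV (trunc n w - w) + l2norm_sq UNIV (trunc n w - w))) \<longlonglongrightarrow> 2 * (0 + 0)"
  proof (rule ennreal_tendsto_cmult)
    show "(\<lambda>n. l2norm_sq UNIV (trunc n w - w) + l2norm_sq UNIV (trunc n w - w)) \<longlonglongrightarrow> 0 + 0"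
      by (rule tendsto_add[OF L L])
  qed simp
  have Q: "(\<lambda>n. qform EE (trunc n w - w)) \<longlonglongrightarrow> 0"
  proof (rule tendsto_sandwich[OF _ _ tendsto_const])
    show "\<forall>\<^sub>F n in sequentially. 0 \<le> qform EE (trunc n w - w)" by simp
    show "\<forall>\<^sub>F n in sequentially. qform EE (trunc n w - w) \<le> 2 * (l2norm_sq UNIV (trunc n w - w) + l2norm_sq UNIV (trunc n w - w))"
      using Qle by simp
    show "(\<lambda>n. 2 * (l2norm_sq UNIV (trunc n w - w) + l2norm_sq UNIV (trunc n w - w))) \<longlonglongrightarrow> 0"
      using lim2 by simp
  qed
  show ?thesis
    unfolding lap_sqrt_dom_def mem_Collect_eq
    by (intro conjI l2w q exI[of _ "\<lambda>n. trunc n w"] allI trunc_fin L Q)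
qed



definition ind :: "nat \<Rightarrow> nat \<Rightarrow> complex" where
  "ind n x = (if blk x = n then 1 else 0)"

lemma S_fin: "finite {x. blk x = n}"
proof -
  have "{x. blk x = n} \<subseteq> {..< 4 * 2 ^ n}" using blk_lt_imp by auto
  then show ?thesis using finite_subset by blast
qed

lemma S_ne: "2 * (2 ^ n - 1) \<in> {x. blk x = n}"
proof -
  have pw: "(1::nat) \<le> 2 ^ n" by simp
  have "blk (2 * (2 ^ n - 1)) = n"
    by (rule blk_eqI) (use pw in auto)
  then show ?thesis by simp
qed

lemma ind_fin: "fin_supp UNIV (ind n)"
  unfolding fin_supp_def ind_def using S_fin by simp

lemma inner_ind: "inner_fs UNIV (ind n) g = (\<Sum>x\<in>{x. blk x = n}. g x)"
proof -
  have "{x \<in> UNIV. ind n x \<noteq> 0} = {x. blk x = n}" by (auto simp: ind_def)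
  then show ?thesis unfolding inner_fs_def by (intro sum.cong) (auto simp: ind_def)
qed

lemma lap_ind: "blk x = n \<Longrightarrow> Re (lap EE (ind n) x) \<le> 2"
proof -
  assume x: "blk x = n"
  have "Re (lap EE (ind n) x) = (\<Sum>y\<in>{y. EE x y}. (if blk y = n then 0 else 1))"
    unfolding lap_def Re_sum by (intro sum.cong) (auto simp: ind_def x)
  also have "\<dots> = (\<Sum>y\<in>{y \<in> {y. EE x y}. blk y \<noteq> n}. 1)"
    by (subst sum.inter_filter[OF nbr_fin]) (auto intro: sum.cong)
  also have "\<dots> = real (card {y \<in> {y. EE x y}. blk y \<noteq> n})" by simp
  also have "{y \<in> {y. EE x y}. blk y \<noteq> n} = {y. E2 x y}" by (auto simp: E2_def x)
  also have "real (card {y. E2 x y}) \<le> 2" using E2_deg[of x] by (simp add: deg_def)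
  finally show ?thesis .
qed

lemma fail:
  "\<not> (\<exists>a C. 0 < a \<and> a < (1::real) \<and> 0 \<le> C \<and>
        (\<forall>f. fin_supp UNIV f \<longrightarrow>
           (1 - a) * Re (inner_fs UNIV f (\<lambda>x. of_nat (deg EE x) * f x))
             - C * Re (inner_fs UNIV f f) \<le> Re (inner_fs UNIV f (lap EE f)) \<and>
           Re (inner_fs UNIV f (lap EE f)) \<le>
             (1 + a) * Re (inner_fs UNIV f (\<lambda>x. of_nat (deg EE x) * f x))
             + C * Re (inner_fs UNIV f f)))"
proof
  assume "\<exists>a C. 0 < a \<and> a < (1::real) \<and> 0 \<le> C \<and>
        (\<forall>f. fin_supp UNIV f \<longrightarrow>
           (1 - a) * Re (inner_fs UNIV f (\<lambda>x. of_nat (deg EE x) * f x))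
             - C * Re (inner_fs UNIV f f) \<le> Re (inner_fs UNIV f (lap EE f)) \<and>
           Re (inner_fs UNIV f (lap EE f)) \<le>
             (1 + a) * Re (inner_fs UNIV f (\<lambda>x. of_nat (deg EE x) * f x))
             + C * Re (inner_fs UNIV f f))"
  then obtain a C where a0: "0 < a" and a1: "a < (1::real)" and C0: "0 \<le> C"
    and H: "\<And>f. fin_supp UNIV f \<Longrightarrow>
           (1 - a) * Re (inner_fs UNIV f (\<lambda>x. of_nat (deg EE x) * f x))
             - C * Re (inner_fs UNIV f f) \<le> Re (inner_fs UNIV f (lap EE f))"
    by blast
  obtain n :: nat where n: "(C + 2) / (1 - a) < real n" using reals_Archimedean2 by blast
  define S where "S = {x. blk x = n}"
  define k where "k = real (card S)"
  have finS: "finite S" unfolding S_def by (rule S_fin)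
  have kpos: "0 < k" unfolding k_def using S_ne[of n] finS S_def
    by (metis card_gt_0_iff empty_iff of_nat_0_less_iff)
  have A: "Re (inner_fs UNIV (ind n) (\<lambda>x. of_nat (deg EE x) * ind n x)) = (\<Sum>x\<in>S. real (deg EE x))"
    unfolding inner_ind Re_sum S_def by (intro sum.cong) (auto simp: ind_def)
  have A2: "k * 2 ^ n \<le> (\<Sum>x\<in>S. real (deg EE x))"
  proof -
    have "(\<Sum>x\<in>S. (2::real) ^ n) \<le> (\<Sum>x\<in>S. real (deg EE x))"
    proof (rule sum_mono)
      fix x assume "x \<in> S"
      then have "blk x = n" by (simp add: S_def)
      then have "2 ^ n \<le> deg EE x" using deg_ge[of x] by simp
      then show "(2::real) ^ n \<le> real (deg EE x)"
        using of_nat_le_iff[of "2 ^ n" "deg EE x", where 'a=real] by simp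
    qed
    then show ?thesis by (simp add: k_def)
  qed
  have B: "Re (inner_fs UNIV (ind n) (ind n)) = k"
    unfolding inner_ind Re_sum k_def S_def by (simp add: ind_def)
  have Lp: "Re (inner_fs UNIV (ind n) (lap EE (ind n))) \<le> 2 * k"
  proof -
    have "Re (inner_fs UNIV (ind n) (lap EE (ind n))) = (\<Sum>x\<in>S. Re (lap EE (ind n) x))"
      unfolding inner_ind Re_sum S_def by simp
    also have "\<dots> \<le> (\<Sum>x\<in>S. 2)"
      by (rule sum_mono) (simp add: S_def lap_ind)
    also have "\<dots> = 2 * k" by (simp add: k_def)
    finally show ?thesis .
  qed
  have ineq: "(1 - a) * (\<Sum>x\<in>S. real (deg EE x)) - C * k \<le> 2 * k"
    using H[OF ind_fin[of n]] A B Lp by simp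
  have "(1 - a) * (k * 2 ^ n) \<le> (1 - a) * (\<Sum>x\<in>S. real (deg EE x))"
    using A2 a1 by (intro mult_left_mono) simp_all
  with ineq have "k * ((1 - a) * 2 ^ n) \<le> k * (C + 2)"
    by (simp add: algebra_simps)
  then have c1: "(1 - a) * 2 ^ n \<le> C + 2" using kpos by simp
  have "C + 2 < (1 - a) * real n" using n a1 by (simp add: pos_divide_less_eq mult.commute)
  also have "\<dots> \<le> (1 - a) * 2 ^ n"
  proof -
    have "n < 2 ^ n" by (rule less_exp)
    then have "real n \<le> 2 ^ n" using of_nat_le_iff[of n "2 ^ n", where 'a=real] by simp
    then show ?thesis using a1 by (intro mult_left_mono) simp_all
  qed
  finally show False using c1 by simp
qed


theorem proposition4p11:
  shows "\<exists>V E. simple_graph V E \<and> bipartite V E \<and>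
           deg_sqrt_dom V E \<subset> lap_sqrt_dom V E \<and>
           \<not> (\<exists>a C. 0 < a \<and> a < (1::real) \<and> 0 \<le> C \<and>
                (\<forall>f. fin_supp V f \<longrightarrow>
                   (1 - a) * Re (inner_fs V f (\<lambda>x. of_nat (deg E x) * f x))
                     - C * Re (inner_fs V f f) \<le> Re (inner_fs V f (lap E f)) \<and>
                   Re (inner_fs V f (lap E f)) \<le>
                     (1 + a) * Re (inner_fs V f (\<lambda>x. of_nat (deg E x) * f x))
                     + C * Re (inner_fs V f f)))"
  proof -
  have sub: "deg_sqrt_dom UNIV EE \<subset> lap_sqrt_dom UNIV EE"
    using incl w_lap w_not_deg by blast
  show ?thesis
    by (rule exI[of _ UNIV], rule exI[of _ EE]) (intro conjI simple bip sub fail)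
qed

end
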